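(* Let $a_0,a_1,\ldots\in\mathbb{R}$ satisfy $\sum_{j=0}^\infty|a_j|<\infty$. Then the series $f(x)=\sum_{j=0}^\infty 2^{j-1}a_jQ_j(x)$ converges absolutely for every $x\in[-1,1]$, and for every integer $D\ge1$, \[ \Big(\frac12\sum_{k=D}^\infty\frac{a_k^2}{k}\Big)^{1/2}\le \inf_{p\in\mathcal{P}_{D-1}}\ \sup_{x\in[-1,1]}|p(x)-f(x)|\le\sum_{j=D}^\infty|a_j|. \]
   Context: $\mathcal{P}_d$ denotes the set of real polynomials in one variable of degree at most $d$. The monic Chebyshev polynomials $Q_d\in\mathcal{P}_d$ are defined by $Q_0(x)=1$ and, for $d\ge1$, by the requirement $Q_d(\cos\theta)=2^{1-d}\cos(d\theta)$ for all $\theta\in[0,2\pi]$. *)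

theory Defs
  imports "HOL-Analysis.Analysis" "HOL-Computational_Algebra.Polynomial"
begin

definition chebQ :: "nat \<Rightarrow> real poly" where
  "chebQ d = (if d = 0 then 1 else
     (THE p. degree p \<le> d \<and> (\<forall>\<theta>\<in>{0..2*pi}. poly p (cos \<theta>) = 2 powr (1 - real d) * cos (real d * \<theta>))))"

end

theory Submission imports Defs begin

fun chebT :: "nat \<Rightarrow> real poly" where
  "chebT 0 = 1"
| "chebT (Suc 0) = [:0,1:]"
| "chebT (Suc (Suc n)) = [:0,2:] * chebT (Suc n) - chebT n"

lemma chebT_cos: "poly (chebT n) (cos t) = cos (real n * t)"
proof (induction n rule: chebT.induct)
  case (3 n)
  define u where "u = real (Suc n) * t"
  have e1: "real (Suc (Suc n)) * t = u + t" unfolding u_def by (simp add: algebra_simps)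
  have e2: "real n * t = u - t" unfolding u_def by (simp add: algebra_simps)
  have IH1: "poly (chebT (Suc n)) (cos t) = cos u" using 3(1) unfolding u_def .
  have IH2: "poly (chebT n) (cos t) = cos (u - t)" using 3(2) unfolding e2 .
  have k: "cos (u + t) + cos (u - t) = 2 * cos t * cos u" by (simp add: cos_add cos_diff)
  have "poly (chebT (Suc (Suc n))) (cos t) = 2 * cos t * cos u - cos (u - t)"
    by (simp only: chebT.simps poly_diff poly_mult IH1 IH2) simp
  also have "\<dots> = cos (u + t)" using k by simp
  finally show ?case unfolding e1 .
qed auto

lemma chebT_degree: "degree (chebT n) \<le> n"
proof (induction n rule: chebT.induct)
  case (3 n)
  have "degree ([:0,2:] * chebT (Suc n)) \<le> Suc (Suc n)"
    using degree_mult_le[of "[:0,2:]" "chebT (Suc n)"] 3 by simp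
  moreover have "degree (chebT n) \<le> Suc (Suc n)" using 3 by simp
  ultimately show ?case by (simp add: degree_diff_le)
qed auto

lemma chebT_bound: "x \<in> {-1..1} \<Longrightarrow> \<bar>poly (chebT n) x\<bar> \<le> 1"
  using chebT_cos[of n "arccos x"] by simp

lemma poly_zero_on_Icc:
  fixes h :: "real poly"
  assumes "\<And>x. x \<in> {-1..1} \<Longrightarrow> poly h x = 0"
  shows "h = 0"
proof (rule ccontr)
  assume "h \<noteq> 0"
  then have "finite {x. poly h x = 0}" by (rule poly_roots_finite)
  moreover have "{-1..1::real} \<subseteq> {x. poly h x = 0}" using assms by auto
  ultimately have "finite {-1..1::real}" using finite_subset by blast
  then show False using infinite_Icc[of "-1::real" 1] by simp
qed

lemma chebQ_eq: "d \<ge> 1 \<Longrightarrow> chebQ d = smult (2 powr (1 - real d)) (chebT d)"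
  unfolding chebQ_def
proof (simp, rule the_equality)
  assume d: "Suc 0 \<le> d"
  show "degree (smult (2 powr (1 - real d)) (chebT d)) \<le> d \<and>
    (\<forall>\<theta>\<in>{0..2 * pi}. poly (smult (2 powr (1 - real d)) (chebT d)) (cos \<theta>) = 2 powr (1 - real d) * cos (real d * \<theta>))"
    using chebT_degree[of d] degree_smult_le[of "2 powr (1 - real d)" "chebT d"]
    by (simp add: chebT_cos)
  fix q assume q: "degree q \<le> d \<and> (\<forall>\<theta>\<in>{0..2 * pi}. poly q (cos \<theta>) = 2 powr (1 - real d) * cos (real d * \<theta>))"
  have "q - smult (2 powr (1 - real d)) (chebT d) = 0"
  proof (rule poly_zero_on_Icc)
    fix x :: real assume x: "x \<in> {-1..1}"
    then have "arccos x \<in> {0..2*pi}" using arccos_bounded[of x] by auto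
    with q have "poly q (cos (arccos x)) = 2 powr (1 - real d) * cos (real d * arccos x)" by blast
    then show "poly (q - smult (2 powr (1 - real d)) (chebT d)) x = 0"
      using x chebT_cos[of d "arccos x"] by simp
  qed
  then show "q = smult (2 powr (1 - real d)) (chebT d)" by simp
qed

lemma term_eq:
  "2 powr (real j - 1) * a * poly (chebQ j) x = (if j = 0 then a / 2 else a) * poly (chebT j) x"
proof (cases "j = 0")
  case True then show ?thesis by (simp add: chebQ_def powr_minus_divide)
next
  case False
  then have "2 powr (real j - 1) * 2 powr (1 - real j) = (1::real)"
    by (simp add: powr_add[symmetric])
  with False show ?thesis by (simp add: chebQ_eq)
qed


lemma hcos: "((\<lambda>t. cos (real_of_int n * t)) has_integral (if n = 0 then 2*pi else 0)) {-pi..pi}"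
  by (rule has_integral_cos_nx)

lemma hcc: "((\<lambda>t. cos (real j * t) * cos (real k * t)) has_integral
   (if j = k then (if j = 0 then 2*pi else pi) else 0)) {-pi..pi}"
proof -
  have eq: "cos (real j * t) * cos (real k * t) =
     (cos (real_of_int (int j - int k) * t) + cos (real_of_int (int j + int k) * t)) / 2" for t
  proof -
    have "cos (real j * t - real k * t) + cos (real j * t + real k * t) = 2 * (cos (real j * t) * cos (real k * t))"
      by (simp add: cos_add cos_diff)
    moreover have "real j * t - real k * t = real_of_int (int j - int k) * t"
      "real j * t + real k * t = real_of_int (int j + int k) * t" by (simp_all add: algebra_simps)
    ultimately show ?thesis by simp
  qed
  have "((\<lambda>t. (cos (real_of_int (int j - int k) * t) + cos (real_of_int (int j + int k) * t)) / 2) has_integral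
     (((if int j - int k = 0 then 2*pi else 0) + (if int j + int k = 0 then 2*pi else 0)) / 2)) {-pi..pi}"
    by (intro has_integral_divide has_integral_add hcos)
  moreover have "((if int j - int k = 0 then 2*pi else 0) + (if int j + int k = 0 then 2*pi else 0)) / 2
     = (if j = k then (if j = 0 then 2*pi else pi) else 0)" by auto
  ultimately show ?thesis unfolding eq by simp
qed

lemma hpow: "m < k \<Longrightarrow> ((\<lambda>t. cos t ^ m * cos (real k * t)) has_integral 0) {-pi..pi}"
proof (induction m arbitrary: k)
  case 0
  then show ?case using hcc[of 0 k] by simp
next
  case (Suc m)
  then obtain k' where k': "k = Suc k'" and mk: "m < k'" by (cases k) auto
  have eq: "cos t ^ Suc m * cos (real k * t) =
      cos t ^ m * cos (real (Suc k) * t) / 2 + cos t ^ m * cos (real k' * t) / 2" for t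
  proof -
    have "cos (real k * t + t) + cos (real k * t - t) = 2 * cos t * cos (real k * t)"
      by (simp add: cos_add cos_diff)
    moreover have "real k * t + t = real (Suc k) * t" "real k * t - t = real k' * t"
      using k' by (simp_all add: algebra_simps)
    ultimately have "cos t * cos (real k * t) = (cos (real (Suc k) * t) + cos (real k' * t)) / 2"
      by simp
    then have h: "cos t ^ m * (cos t * cos (real k * t)) = cos t ^ m * ((cos (real (Suc k) * t) + cos (real k' * t)) / 2)"
      by (rule arg_cong)
    have "cos t ^ Suc m * cos (real k * t) = cos t ^ m * (cos t * cos (real k * t))" by simp
    also note h
    also have "cos t ^ m * ((cos (real (Suc k) * t) + cos (real k' * t)) / 2) =
      cos t ^ m * cos (real (Suc k) * t) / 2 + cos t ^ m * cos (real k' * t) / 2"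
      by (simp only: distrib_left add_divide_distrib times_divide_eq_right)
    finally show ?thesis .
  qed
  have "((\<lambda>t. cos t ^ m * cos (real (Suc k) * t) / 2 + cos t ^ m * cos (real k' * t) / 2) has_integral (0/2 + 0/2)) {-pi..pi}"
    using Suc k' mk by (intro has_integral_add has_integral_divide Suc.IH) auto
  then show ?case unfolding eq by simp
qed

lemma horth: "degree R < k \<Longrightarrow> ((\<lambda>t. poly R (cos t) * cos (real k * t)) has_integral 0) {-pi..pi}"
proof -
  assume d: "degree R < k"
  have "((\<lambda>t. \<Sum>i\<le>degree R. coeff R i * (cos t ^ i * cos (real k * t))) has_integral
      (\<Sum>i\<le>degree R. coeff R i * 0)) {-pi..pi}"
    using d by (intro has_integral_sum has_integral_mult_right hpow) auto
  then show ?thesis by (simp add: poly_altdef sum_distrib_right mult.assoc)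
qed


lemma bessel:
  fixes R :: "real poly" and b :: "nat \<Rightarrow> real" and D n :: nat and M :: real
  assumes deg: "degree R < D"
    and bound: "\<And>t. \<bar>poly R (cos t) - (\<Sum>k<n. b k * cos (real (k+D) * t))\<bar> \<le> M"
  shows "(\<Sum>k<n. (b k)^2) \<le> 2 * M^2"
proof -
  define r where "r t = poly R (cos t)" for t
  define s where "s t = (\<Sum>k<n. b k * cos (real (k+D) * t))" for t
  have rs: "((\<lambda>t. r t * s t) has_integral 0) {-pi..pi}"
  proof -
    have "((\<lambda>t. \<Sum>k<n. b k * (poly R (cos t) * cos (real (k+D) * t))) has_integral (\<Sum>k<n. b k * 0)) {-pi..pi}"
      using deg by (intro has_integral_sum has_integral_mult_right horth) auto
    then show ?thesis unfolding r_def s_def by (simp add: sum_distrib_left algebra_simps)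
  qed
  have D: "D \<ge> 1" using deg by simp
  have ss: "((\<lambda>t. s t * s t) has_integral (pi * (\<Sum>k<n. (b k)^2))) {-pi..pi}"
  proof -
    have h: "((\<lambda>t. \<Sum>j<n. \<Sum>k<n. b j * b k * (cos (real (j+D) * t) * cos (real (k+D) * t))) has_integral
      (\<Sum>j<n. \<Sum>k<n. b j * b k * (if j + D = k + D then (if j + D = 0 then 2*pi else pi) else 0))) {-pi..pi}"
      by (intro has_integral_sum has_integral_mult_right hcc) auto
    have "(\<Sum>j<n. \<Sum>k<n. b j * b k * (if j + D = k + D then (if j + D = 0 then 2*pi else pi) else 0))
       = (\<Sum>j<n. \<Sum>k<n. (if j = k then b j * b k * pi else 0))"
      using D by (intro sum.cong) auto
    also have "\<dots> = (\<Sum>j<n. b j * b j * pi)"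
      by (simp add: sum.delta)
    also have "\<dots> = pi * (\<Sum>k<n. (b k)^2)"
      by (simp add: sum_distrib_left power2_eq_square algebra_simps)
    finally have e: "(\<Sum>j<n. \<Sum>k<n. b j * b k * (if j + D = k + D then (if j + D = 0 then 2*pi else pi) else 0)) = pi * (\<Sum>k<n. (b k)^2)" .
    have e2: "s t * s t = (\<Sum>j<n. \<Sum>k<n. b j * b k * (cos (real (j+D) * t) * cos (real (k+D) * t)))" for t
      unfolding s_def sum_product by (simp add: algebra_simps)
    show ?thesis using h unfolding e e2 .
  qed
  have cr: "continuous_on {-pi..pi} (\<lambda>t. r t * r t)"
    unfolding r_def by (intro continuous_intros)
  then obtain I where rr: "((\<lambda>t. r t * r t) has_integral I) {-pi..pi}"
    using integrable_continuous_real by blast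
  have I0: "0 \<le> I" using has_integral_nonneg[OF rr] by simp
  have "((\<lambda>t. r t * r t - 2 * (r t * s t) + s t * s t) has_integral (I - 2 * 0 + pi * (\<Sum>k<n. (b k)^2))) {-pi..pi}"
    by (intro has_integral_add has_integral_diff has_integral_mult_right rr rs ss)
  moreover have "((\<lambda>t. M^2) has_integral (2 * pi * M^2)) {-pi..pi}"
    using has_integral_const_real[of "M^2" "-pi" pi] by simp
  moreover have "r t * r t - 2 * (r t * s t) + s t * s t \<le> M^2" for t
  proof -
    have a: "\<bar>r t - s t\<bar> \<le> M" using bound unfolding r_def s_def .
    then have "(r t - s t)^2 \<le> M^2"
      by (metis abs_ge_zero abs_le_square_iff abs_of_nonneg order_trans)
    then show ?thesis by (simp add: power2_eq_square algebra_simps)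
  qed
  ultimately have "I - 2 * 0 + pi * (\<Sum>k<n. (b k)^2) \<le> 2 * pi * M^2"
    by (rule has_integral_le)
  with I0 have "pi * (\<Sum>k<n. (b k)^2) \<le> 2 * pi * M^2" by linarith
  then have "pi * (\<Sum>k<n. (b k)^2) \<le> pi * (2 * M^2)" by (simp add: mult_ac)
  then show ?thesis using pi_gt_zero by (simp add: mult_le_cancel_left_pos)
qed


lemma sum_split_shift: fixes D n :: nat shows "(\<Sum>j<D+n. h j) = (\<Sum>j<D. h j) + (\<Sum>k<n. h (k+D))"
  by (induction n) (simp_all add: ac_simps)

theorem proposition2p2:
  fixes a :: "nat \<Rightarrow> real"
  assumes "summable (\<lambda>j. \<bar>a j\<bar>)"
  shows "(\<forall>x\<in>{-1..1}. summable (\<lambda>j. \<bar>2 powr (real j - 1) * a j * poly (chebQ j) x\<bar>))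
    \<and> (\<forall>D::nat. D \<ge> 1 \<longrightarrow>
         (let f = (\<lambda>x. \<Sum>j. 2 powr (real j - 1) * a j * poly (chebQ j) x);
              E = (INF p\<in>{p :: real poly. degree p \<le> D - 1}. SUP x\<in>{-1..1}. \<bar>poly p x - f x\<bar>)
          in sqrt ((1/2) * (\<Sum>k. (a (k + D))\<^sup>2 / real (k + D))) \<le> E
             \<and> E \<le> (\<Sum>k. \<bar>a (k + D)\<bar>)))"
proof -
  note sa = assms
  have sam: "summable (\<lambda>j. \<bar>a (j + m)\<bar>)" for m
    using sa summable_iff_shift[of "\<lambda>j. \<bar>a j\<bar>" m] by simp
  define c where "c j = (if j = 0 then a j / 2 else a j)" for j
  define g where "g j x = c j * poly (chebT j) x" for j x
  have tg: "2 powr (real j - 1) * a j * poly (chebQ j) x = g j x" for j x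
    unfolding g_def c_def by (rule term_eq)
  have ca: "\<bar>c j\<bar> \<le> \<bar>a j\<bar>" for j unfolding c_def by auto
  have gb: "\<bar>g j x\<bar> \<le> \<bar>a j\<bar>" if "x \<in> {-1..1}" for j x
  proof -
    have "\<bar>g j x\<bar> = \<bar>c j\<bar> * \<bar>poly (chebT j) x\<bar>" unfolding g_def by (simp add: abs_mult)
    also have "\<dots> \<le> \<bar>a j\<bar> * 1"
      using ca chebT_bound[OF that, of j] by (intro mult_mono) auto
    finally show ?thesis by simp
  qed
  have gsa: "summable (\<lambda>j. \<bar>g (j + m) x\<bar>)" if "x \<in> {-1..1}" for x m
  proof -
    have "summable (\<lambda>j. \<bar>a (j + m)\<bar>)" by (rule sam)
    then show ?thesis
    proof (rule summable_comparison_test')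
      fix j :: nat show "norm \<bar>g (j + m) x\<bar> \<le> \<bar>a (j + m)\<bar>" using gb[OF that, of "j+m"] by simp
    qed
  qed
  have gs: "summable (\<lambda>j. g j x)" if "x \<in> {-1..1}" for x
    using gsa[OF that, of 0] summable_rabs_cancel[of "\<lambda>j. g j x"] by simp
  define F where "F x = (\<Sum>j. g j x)" for x
  have tail: "F x = (\<Sum>j. g (j + m) x) + (\<Sum>j<m. g j x)" if "x \<in> {-1..1}" for x m
    unfolding F_def using suminf_split_initial_segment[OF gs[OF that]] .
  have tailb: "\<bar>\<Sum>j. g (j + m) x\<bar> \<le> (\<Sum>j. \<bar>a (j + m)\<bar>)" if "x \<in> {-1..1}" for x m
  proof -
    have "\<bar>\<Sum>j. g (j + m) x\<bar> \<le> (\<Sum>j. \<bar>g (j + m) x\<bar>)" by (rule summable_rabs[OF gsa[OF that]])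
    also have "\<dots> \<le> (\<Sum>j. \<bar>a (j + m)\<bar>)"
      using gsa[OF that] sam gb[OF that] by (intro suminf_le) auto
    finally show ?thesis .
  qed
  have Fb: "\<bar>F x\<bar> \<le> (\<Sum>j. \<bar>a j\<bar>)" if "x \<in> {-1..1}" for x
    using tailb[OF that, of 0] unfolding F_def by simp
  have part1: "\<forall>x\<in>{-1..1}. summable (\<lambda>j. \<bar>2 powr (real j - 1) * a j * poly (chebQ j) x\<bar>)"
    using gsa[of _ 0] by (simp add: tg)
  have fF: "(\<lambda>x. \<Sum>j. 2 powr (real j - 1) * a j * poly (chebQ j) x) = F"
    unfolding F_def tg ..
  define SP where "SP p = (SUP x\<in>{-1..1}. \<bar>poly p x - F x\<bar>)" for p
  have bdd: "bdd_above ((\<lambda>x. \<bar>poly p x - F x\<bar>) ` {-1..1})" for p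
  proof -
    have "compact ((\<lambda>x. poly p x) ` {-1..1::real})"
      by (intro compact_continuous_image continuous_intros) auto
    then obtain B where B: "\<And>x. x \<in> {-1..1::real} \<Longrightarrow> \<bar>poly p x\<bar> \<le> B"
    proof -
      have "bounded ((\<lambda>x. poly p x) ` {-1..1::real})" using \<open>compact _\<close> by (rule compact_imp_bounded)
      then obtain B where "\<forall>y\<in>(\<lambda>x. poly p x) ` {-1..1::real}. \<bar>y\<bar> \<le> B" unfolding bounded_real by blast
      then show ?thesis using that by (meson image_eqI)
    qed
    show ?thesis
    proof (rule bdd_aboveI2)
      fix x :: real assume x: "x \<in> {-1..1}"
      have "\<bar>poly p x - F x\<bar> \<le> \<bar>poly p x\<bar> + \<bar>F x\<bar>" by simp
      then show "\<bar>poly p x - F x\<bar> \<le> B + (\<Sum>j. \<bar>a j\<bar>)" using B[OF x] Fb[OF x] by linarith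
    qed
  qed
  have SPu: "\<bar>poly p x - F x\<bar> \<le> SP p" if "x \<in> {-1..1}" for p x
    unfolding SP_def using bdd that by (rule cSUP_upper2) auto
  have SP0: "0 \<le> SP p" for p
  proof -
    have "\<bar>poly p 0 - F 0\<bar> \<le> SP p" by (rule SPu) simp
    then show ?thesis by linarith
  qed
  show ?thesis
  proof (intro conjI part1 allI impI)
    fix D :: nat assume D: "D \<ge> 1"
    show "let f = (\<lambda>x. \<Sum>j. 2 powr (real j - 1) * a j * poly (chebQ j) x);
              E = (INF p\<in>{p :: real poly. degree p \<le> D - 1}. SUP x\<in>{-1..1}. \<bar>poly p x - f x\<bar>)
          in sqrt ((1/2) * (\<Sum>k. (a (k + D))\<^sup>2 / real (k + D))) \<le> E
             \<and> E \<le> (\<Sum>k. \<bar>a (k + D)\<bar>)"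
      unfolding Let_def fF SP_def[symmetric]
    proof
      define P0 where "P0 = (\<Sum>j<D. smult (c j) (chebT j))"
      have degP0: "degree P0 \<le> D - 1"
        unfolding P0_def
      proof (rule degree_sum_le)
        fix j assume "j \<in> {..<D}"
        then show "degree (smult (c j) (chebT j)) \<le> D - 1"
          using chebT_degree[of j] degree_smult_le[of "c j" "chebT j"] by auto
      qed simp
      have polyP0: "poly P0 x = (\<Sum>j<D. g j x)" for x
        unfolding P0_def g_def by (simp add: poly_sum)
      show "(INF p\<in>{p. degree p \<le> D - 1}. SP p) \<le> (\<Sum>k. \<bar>a (k + D)\<bar>)"
      proof -
        have "(INF p\<in>{p. degree p \<le> D - 1}. SP p) \<le> SP P0"
          using degP0 SP0 by (intro cINF_lower bdd_belowI2) auto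
        also have "SP P0 \<le> (\<Sum>k. \<bar>a (k + D)\<bar>)"
          unfolding SP_def
        proof (rule cSUP_least)
          fix x :: real assume x: "x \<in> {-1..1}"
          have "poly P0 x - F x = - (\<Sum>j. g (j + D) x)"
            using tail[OF x, of D] polyP0 by simp
          then show "\<bar>poly P0 x - F x\<bar> \<le> (\<Sum>k. \<bar>a (k + D)\<bar>)"
            using tailb[OF x, of D] by simp
        qed simp
        finally show ?thesis .
      qed
      show "sqrt ((1/2) * (\<Sum>k. (a (k + D))\<^sup>2 / real (k + D))) \<le> (INF p\<in>{p. degree p \<le> D - 1}. SP p)"
      proof (rule cINF_greatest)
        show "{p. degree p \<le> D - 1} \<noteq> {}" by (metis (mono_tags) degree_0 empty_iff mem_Collect_eq zero_le)
      next
        fix p :: "real poly" assume p: "p \<in> {p. degree p \<le> D - 1}"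
        define M where "M = SP p"
        define eps where "eps n = (\<Sum>j. \<bar>a (j + (n + D))\<bar>)" for n
        define R where "R = p - P0"
        have degR: "degree R < D"
          unfolding R_def using p degP0 D by (intro le_less_trans[OF degree_diff_le]) auto
        have fin: "(\<Sum>k<n. (a (k + D))^2) \<le> 2 * (M + eps n)^2" for n
        proof (rule bessel[OF degR])
          fix t :: real
          define x where "x = cos t"
          have x: "x \<in> {-1..1}" unfolding x_def by simp
          have gk: "g (k + D) x = a (k + D) * cos (real (k + D) * t)" for k
            using D unfolding g_def c_def x_def by (simp add: chebT_cos)
          have "poly R (cos t) - (\<Sum>k<n. a (k + D) * cos (real (k + D) * t)) = poly p x - (\<Sum>j<D+n. g j x)"
            unfolding R_def x_def[symmetric] sum_split_shift gk[symmetric] by (simp add: polyP0)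
          also have "\<dots> = (poly p x - F x) + (\<Sum>j. g (j + (D + n)) x)"
            using tail[OF x, of "D+n"] by simp
          finally have e: "poly R (cos t) - (\<Sum>k<n. a (k + D) * cos (real (k + D) * t)) = (poly p x - F x) + (\<Sum>j. g (j + (D + n)) x)" .
          have "\<bar>poly p x - F x\<bar> \<le> M" unfolding M_def by (rule SPu[OF x])
          moreover have "\<bar>\<Sum>j. g (j + (D + n)) x\<bar> \<le> eps n"
            using tailb[OF x, of "D+n"] unfolding eps_def by (simp add: ac_simps)
          ultimately show "\<bar>poly R (cos t) - (\<Sum>k<n. a (k + D) * cos (real (k + D) * t))\<bar> \<le> M + eps n"
            unfolding e by linarith
        qed
        have sq: "summable (\<lambda>k. (a (k + D))^2)"
        proof -
          have "(\<lambda>k. \<bar>a (k + D)\<bar>) \<longlonglongrightarrow> 0" by (rule summable_LIMSEQ_zero[OF sam])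
          then have ev: "eventually (\<lambda>k. \<bar>a (k + D)\<bar> < 1) sequentially"
            by (rule order_tendstoD) simp
          show ?thesis
          proof (rule summable_comparison_test_ev[OF _ sam[of D]])
            show "eventually (\<lambda>k. norm ((a (k + D))^2) \<le> \<bar>a (k + D)\<bar>) sequentially"
              using ev
            proof (rule eventually_mono)
              fix k assume "\<bar>a (k + D)\<bar> < 1"
              then have "\<bar>a (k + D)\<bar> \<le> 1" by simp
              then have "\<bar>a (k + D)\<bar> * \<bar>a (k + D)\<bar> \<le> 1 * \<bar>a (k + D)\<bar>"
                by (intro mult_right_mono) auto
              then show "norm ((a (k + D))^2) \<le> \<bar>a (k + D)\<bar>" by (simp add: power2_eq_square abs_mult)
            qed
          qed
        qed
        have lim1: "(\<lambda>n. \<Sum>k<n. (a (k + D))^2) \<longlonglongrightarrow> (\<Sum>k. (a (k + D))^2)"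
          by (rule summable_LIMSEQ[OF sq])
        have "(\<lambda>n. eps n) \<longlonglongrightarrow> 0"
          unfolding eps_def
          using LIMSEQ_ignore_initial_segment[OF suminf_exist_split2[OF sa], of D] by simp
        then have lim2: "(\<lambda>n. 2 * (M + eps n)^2) \<longlonglongrightarrow> 2 * (M + 0)^2"
          by (intro tendsto_intros)
        have le1: "(\<Sum>k. (a (k + D))^2) \<le> 2 * M^2"
          using LIMSEQ_le[OF lim1 lim2] fin by auto
        have le2: "(\<Sum>k. (a (k + D))\<^sup>2 / real (k + D)) \<le> (\<Sum>k. (a (k + D))^2)"
        proof -
          have t: "(a (k + D))\<^sup>2 / real (k + D) \<le> (a (k + D))^2" for k
          proof -
            have "real (k + D) \<ge> 1" using D by simp
            then show ?thesis by (simp add: divide_le_eq mult_le_cancel_left1 order_trans[OF _ mult_right_mono]) 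
          qed
          have s2: "summable (\<lambda>k. (a (k + D))\<^sup>2 / real (k + D))"
            by (rule summable_comparison_test'[OF sq, of 0]) (use t in auto)
          show ?thesis by (rule suminf_le[OF t s2 sq])
        qed
        have M0: "0 \<le> M" unfolding M_def by (rule SP0)
        have "(1/2) * (\<Sum>k. (a (k + D))\<^sup>2 / real (k + D)) \<le> M^2" using le1 le2 by linarith
        then have "sqrt ((1/2) * (\<Sum>k. (a (k + D))\<^sup>2 / real (k + D))) \<le> sqrt (M^2)"
          by (rule real_sqrt_le_mono)
        then show "sqrt ((1/2) * (\<Sum>k. (a (k + D))\<^sup>2 / real (k + D))) \<le> SP p"
          using M0 unfolding M_def by simp
      qed
    qed
  qed
qed

end
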